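(* Let $\mathcal K$ be a quantum channel on $n\times n$ matrices described by Kraus operators $K_1,\dots,K_d\in\mathbb C^{n\times n}$ (with $\mathcal K(\rho)=\sum_j K_j\rho K_j^\dagger$, $\sum_j K_j^\dagger K_j=I_n$) such that $\mathrm{Tr}(K_j)=0$ for $j=2,\dots,d$. Then $$\cos^{-1}\left[\tfrac1n\,\lvert\mathrm{Tr}(K_1)\rvert\right]\le\lVert\mathcal K\rVert,$$ with $\cos^{-1}$ taking values in $[0,\pi]$.
   Context: For a unitary matrix $U$ of size $r$ with eigenvalues $e^{i\theta_j}$, $\theta_j\in(-\pi,\pi]$, its time-energy cost is $\lVert U\rVert=\max_{1\le j\le r}|\theta_j|$. For a quantum channel $\mathcal K$ acting on an $n$-dimensional system $A$, its time-energy cost is $\lVert\mathcal K\rVert=\inf_U\lVert U\rVert$, where the infimum is over all finite-dimensional ancilla systems $B$ with a fixed standard state $|0\rangle_B$ and all unitaries $U_{BA}$ on $B\otimes A$ such that $\mathcal K(\rho)=\mathrm{Tr}_B[U_{BA}(|0\rangle_B\langle 0|\otimes\rho_A)U_{BA}^\dagger]$ for all density matrices $\rho$ on $A$. *)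

theory Defs
  imports "Jordan_Normal_Form.Char_Poly"
begin

definition adj :: "complex mat \<Rightarrow> complex mat" where
  "adj A = mat (dim_col A) (dim_row A) (\<lambda>(i,j). cnj (A $$ (j,i)))"

definition mtrace :: "complex mat \<Rightarrow> complex" where
  "mtrace A = (\<Sum>i<dim_row A. A $$ (i,i))"

definition unitary_mat :: "nat \<Rightarrow> complex mat \<Rightarrow> bool" where
  "unitary_mat r U \<longleftrightarrow> U \<in> carrier_mat r r \<and> U * adj U = 1\<^sub>m r \<and> adj U * U = 1\<^sub>m r"

definition density_mat :: "nat \<Rightarrow> complex mat \<Rightarrow> bool" where
  "density_mat n \<rho> \<longleftrightarrow> \<rho> \<in> carrier_mat n n \<and> adj \<rho> = \<rho> \<and>
     (\<forall>v \<in> carrier_vec n. \<exists>t::real. t \<ge> 0 \<and> conjugate v \<bullet> (\<rho> *\<^sub>v v) = complex_of_real t) \<and>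
     mtrace \<rho> = 1"

text \<open>Time-energy cost of a unitary: max |theta_j| over eigenvalues e^{i theta_j}, theta_j in (-pi,pi].
  Isabelle's Arg takes values in (-pi,pi].\<close>
definition unitary_cost :: "complex mat \<Rightarrow> real" where
  "unitary_cost U = Max {\<bar>Arg z\<bar> | z. eigenvalue U z}"

definition kraus_channel :: "nat \<Rightarrow> complex mat list \<Rightarrow> complex mat \<Rightarrow> complex mat" where
  "kraus_channel n Ks \<rho> = mat n n (\<lambda>(a,a'). \<Sum>j<length Ks. (Ks ! j * \<rho> * adj (Ks ! j)) $$ (a,a'))"

definition kraus_ops :: "nat \<Rightarrow> complex mat list \<Rightarrow> bool" where
  "kraus_ops n Ks \<longleftrightarrow> (\<forall>K \<in> set Ks. K \<in> carrier_mat n n) \<and>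
     mat n n (\<lambda>(a,a'). \<Sum>j<length Ks. (adj (Ks ! j) * Ks ! j) $$ (a,a')) = 1\<^sub>m n"

text \<open>Composite system B \<otimes> A with dim B = m, dim A = n; basis index (b,a) \<mapsto> b*n + a.
  |0><0|_B \<otimes> \<rho>_A, and the partial trace over B.\<close>
definition anc_embed :: "nat \<Rightarrow> nat \<Rightarrow> complex mat \<Rightarrow> complex mat" where
  "anc_embed m n \<rho> = mat (m*n) (m*n)
     (\<lambda>(i,j). if i < n \<and> j < n then \<rho> $$ (i,j) else 0)"

definition ptrace_B :: "nat \<Rightarrow> nat \<Rightarrow> complex mat \<Rightarrow> complex mat" where
  "ptrace_B m n M = mat n n (\<lambda>(a,a'). \<Sum>b<m. M $$ (b*n + a, b*n + a'))"

definition dilation :: "nat \<Rightarrow> (complex mat \<Rightarrow> complex mat) \<Rightarrow> nat \<Rightarrow> complex mat \<Rightarrow> bool" where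
  "dilation n \<Phi> m U \<longleftrightarrow> m \<ge> 1 \<and> unitary_mat (m*n) U \<and>
     (\<forall>\<rho>. density_mat n \<rho> \<longrightarrow> \<Phi> \<rho> = ptrace_B m n (U * anc_embed m n \<rho> * adj U))"

definition channel_cost :: "nat \<Rightarrow> (complex mat \<Rightarrow> complex mat) \<Rightarrow> real" where
  "channel_cost n \<Phi> = Inf {unitary_cost U | U m. dilation n \<Phi> m U}"

end

theory Submission
  imports Defs "Jordan_Normal_Form.Schur_Decomposition" "Jordan_Normal_Form.Spectral_Radius"
begin

lemma adj_carrier[simp]: "A \<in> carrier_mat r c \<Longrightarrow> adj A \<in> carrier_mat c r"
  by (auto simp: adj_def)
lemma adj_dims[simp]: "dim_row (adj A) = dim_col A" "dim_col (adj A) = dim_row A"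
  by (auto simp: adj_def)
lemma adj_index[simp]: "i < dim_col A \<Longrightarrow> j < dim_row A \<Longrightarrow> adj A $$ (i,j) = cnj (A $$ (j,i))"
  by (auto simp: adj_def)

lemma adj_adj[simp]: "adj (adj A) = A"
  by (rule eq_matI, auto)

lemma adj_mult: assumes "A \<in> carrier_mat r k" "B \<in> carrier_mat k c"
  shows "adj (A * B) = adj B * adj A"
  using assms by (intro eq_matI) (auto simp: scalar_prod_def row_def col_def intro: sum.cong)

lemma adj_one[simp]: "adj (1\<^sub>m n) = 1\<^sub>m n"
  by (rule eq_matI, auto)

lemma adj_zero[simp]: "adj (0\<^sub>m r c) = 0\<^sub>m c r"
  by (rule eq_matI, auto)

lemma adj_minus: assumes "A \<in> carrier_mat r c" "B \<in> carrier_mat r c"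
  shows "adj (A - B) = adj A - adj B"
  using assms by (intro eq_matI) auto

lemma adj_four_block: assumes "A \<in> carrier_mat r1 c1" "B \<in> carrier_mat r1 c2"
  "C \<in> carrier_mat r2 c1" "D \<in> carrier_mat r2 c2"
  shows "adj (four_block_mat A B C D) = four_block_mat (adj A) (adj C) (adj B) (adj D)"
  using assms by (intro eq_matI) (auto simp: four_block_mat_def)

lemma mult3_index: assumes "A \<in> carrier_mat p q" "X \<in> carrier_mat q q" "B \<in> carrier_mat r q"
  "i < p" "j < r"
  shows "(A * X * adj B) $$ (i,j) = (\<Sum>k<q. \<Sum>l<q. A $$ (i,k) * X $$ (k,l) * cnj (B $$ (j,l)))"
proof -
  have "(A * X * adj B) $$ (i,j) = (\<Sum>l<q. (\<Sum>k<q. A $$ (i,k) * X $$ (k,l)) * cnj (B $$ (j,l)))"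
    using assms by (auto simp: scalar_prod_def row_def col_def lessThan_atLeast0 intro!: sum.cong)
  also have "\<dots> = (\<Sum>l<q. \<Sum>k<q. A $$ (i,k) * X $$ (k,l) * cnj (B $$ (j,l)))"
    by (simp add: sum_distrib_right)
  also have "\<dots> = (\<Sum>k<q. \<Sum>l<q. A $$ (i,k) * X $$ (k,l) * cnj (B $$ (j,l)))"
    by (rule sum.swap)
  finally show ?thesis .
qed

lemma adj_mult_index: assumes "A \<in> carrier_mat r c" "B \<in> carrier_mat r d" "i < c" "j < d"
  shows "(adj A * B) $$ (i,j) = (\<Sum>k<r. cnj (A $$ (k,i)) * B $$ (k,j))"
  using assms by (auto simp: scalar_prod_def row_def col_def lessThan_atLeast0 intro!: sum.cong)

lemma mult_adj_index: assumes "A \<in> carrier_mat r c" "B \<in> carrier_mat d c" "i < r" "j < d"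
  shows "(A * adj B) $$ (i,j) = (\<Sum>k<c. A $$ (i,k) * cnj (B $$ (j,k)))"
  using assms by (auto simp: scalar_prod_def row_def col_def lessThan_atLeast0 intro!: sum.cong)

lemma rank1_density:
  fixes f :: "nat \<Rightarrow> complex"
  assumes s: "s = (\<Sum>i<n. (cmod (f i))^2)" and s0: "s \<noteq> 0"
  shows "density_mat n (mat n n (\<lambda>(i,j). f i * cnj (f j) / complex_of_real s))"
proof -
  let ?r = "mat n n (\<lambda>(i,j). f i * cnj (f j) / complex_of_real s)"
  have spos: "s > 0" using s s0 by (metis sum_nonneg zero_le_power2 order_le_less)
  have herm: "adj ?r = ?r" by (rule eq_matI) auto
  have psd: "\<exists>t::real. t \<ge> 0 \<and> conjugate v \<bullet> (?r *\<^sub>v v) = complex_of_real t"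
    if v: "v \<in> carrier_vec n" for v
  proof -
    define g where "g = (\<Sum>i<n. cnj (v $ i) * f i)"
    have "conjugate v \<bullet> (?r *\<^sub>v v) = (\<Sum>i<n. cnj (v $ i) * (\<Sum>j<n. f i * cnj (f j) / complex_of_real s * v $ j))"
      using v by (auto simp: scalar_prod_def mult_mat_vec_def row_def lessThan_atLeast0 intro!: sum.cong)
    also have "\<dots> = (\<Sum>i<n. cnj (v $ i) * f i) * (\<Sum>j<n. cnj (f j) * v $ j) / complex_of_real s"
      by (simp add: sum_distrib_left sum_distrib_right sum_divide_distrib mult_ac) (subst sum.swap, simp add: mult_ac)
    also have "\<dots> = g * cnj g / complex_of_real s" by (simp add: g_def mult.commute)
    also have "g * cnj g / complex_of_real s = complex_of_real ((cmod g)^2 / s)"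
      using complex_norm_square[of g] by simp
    finally show ?thesis using spos g_def by (intro exI[of _ "(cmod g)^2 / s"]) auto
  qed
  have tr: "mtrace ?r = 1"
  proof -
    have "mtrace ?r = (\<Sum>i<n. f i * cnj (f i)) / complex_of_real s"
      by (simp add: mtrace_def sum_divide_distrib)
    also have "(\<Sum>i<n. f i * cnj (f i)) = complex_of_real s"
      by (simp add: s complex_norm_square del: of_real_power)
    finally show ?thesis using s0 by simp
  qed
  show ?thesis unfolding density_mat_def using herm psd tr by auto
qed

lemma sum_delta2:
  fixes D :: "nat \<Rightarrow> nat \<Rightarrow> complex"
  assumes "a < n" "b < n"
  shows "(\<Sum>k<n. \<Sum>l<n. (if k = a then \<alpha> else 0) * cnj (if l = b then \<beta> else 0) * D k l) = \<alpha> * cnj \<beta> * D a b"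
proof -
  have "\<And>k l. (if k = a then \<alpha> else 0) * cnj (if l = b then \<beta> else 0) * D k l = (if l = b then (if k = a then \<alpha> * cnj \<beta> * D a b else 0) else 0)"
    by auto
  then show ?thesis using assms by simp
qed

lemma quad_two:
  fixes D :: "nat \<Rightarrow> nat \<Rightarrow> complex"
  assumes "a < n" "b < n" "a \<noteq> b"
  shows "(\<Sum>k<n. \<Sum>l<n. ((if k = a then \<alpha> else 0) + (if k = b then \<beta> else 0)) *
          cnj ((if l = a then \<alpha> else 0) + (if l = b then \<beta> else 0)) * D k l)
   = \<alpha> * cnj \<alpha> * D a a + \<alpha> * cnj \<beta> * D a b + \<beta> * cnj \<alpha> * D b a + \<beta> * cnj \<beta> * D b b"
proof -
  let ?x = "\<lambda>k. (if k = a then \<alpha> else 0)" and ?y = "\<lambda>k. (if k = b then \<beta> else 0)"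
  have e: "\<And>k l. (?x k + ?y k) * cnj (?x l + ?y l) * D k l = ?x k * cnj (?x l) * D k l + ?x k * cnj (?y l) * D k l + ?y k * cnj (?x l) * D k l + ?y k * cnj (?y l) * D k l"
    by (simp add: algebra_simps)
  show ?thesis unfolding e sum.distrib using sum_delta2[OF assms(1) assms(1)] sum_delta2[OF assms(1) assms(2)]
    sum_delta2[OF assms(2) assms(1)] sum_delta2[OF assms(2) assms(2)] by simp
qed

lemma polar:
  fixes D :: "nat \<Rightarrow> nat \<Rightarrow> complex"
  assumes H: "\<And>\<rho>. density_mat n \<rho> \<Longrightarrow> (\<Sum>k<n. \<Sum>l<n. \<rho> $$ (k,l) * D k l) = 0"
    and ab: "a < n" "b < n"
  shows "D a b = 0"
proof -
  have Q: "(\<Sum>k<n. \<Sum>l<n. f k * cnj (f l) * D k l) = 0"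
    if s0: "(\<Sum>i<n. (cmod (f i))^2) \<noteq> 0" for f
  proof -
    define s where "s = (\<Sum>i<n. (cmod (f i))^2)"
    have "s \<noteq> 0" using s0 s_def by simp
    from H[OF rank1_density[OF s_def this]]
    have "(\<Sum>k<n. \<Sum>l<n. f k * cnj (f l) / complex_of_real s * D k l) = 0" by simp
    hence "(\<Sum>k<n. \<Sum>l<n. f k * cnj (f l) * D k l) / complex_of_real s = 0"
      by (simp add: sum_divide_distrib)
    thus ?thesis using \<open>s \<noteq> 0\<close> by simp
  qed
  have pos: "(\<Sum>i<n. (cmod (f i))^2) \<noteq> 0" if "c < n" "cmod (f c) = 1" for f c
  proof -
    have "(cmod (f c))^2 \<le> (\<Sum>i<n. (cmod (f i))^2)"
      by (rule member_le_sum) (use that in auto)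
    thus ?thesis using that by auto
  qed
  have diag: "D c c = 0" if c: "c < n" for c
  proof -
    let ?f = "\<lambda>i. if i = c then (1::complex) else 0"
    have "(\<Sum>k<n. \<Sum>l<n. ?f k * cnj (?f l) * D k l) = 0"
      by (rule Q, rule pos[OF c]) auto
    thus ?thesis using sum_delta2[OF c c, of 1 1 D] by simp
  qed
  show ?thesis
  proof (cases "a = b")
    case True thus ?thesis using diag ab by auto
  next
    case False
    have g: "\<alpha> * cnj \<alpha> * D a a + \<alpha> * cnj \<beta> * D a b + \<beta> * cnj \<alpha> * D b a + \<beta> * cnj \<beta> * D b b = 0"
      if "cmod \<alpha> = 1" for \<alpha> \<beta>
    proof -
      let ?f = "\<lambda>i. (if i = a then \<alpha> else 0) + (if i = b then \<beta> else 0)"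
      have "(\<Sum>k<n. \<Sum>l<n. ?f k * cnj (?f l) * D k l) = 0"
        by (rule Q, rule pos[OF ab(1)]) (use that False in auto)
      thus ?thesis using quad_two[OF ab False, of \<alpha> \<beta> D] by simp
    qed
    have 1: "D a b + D b a = 0" using g[of 1 1] diag ab by simp
    have 2: "- \<i> * D a b + \<i> * D b a = 0" using g[of 1 \<i>] diag ab by simp
    have 3: "D b a = - D a b" using 1 by (simp add: eq_neg_iff_add_eq_0 add.commute)
    have "\<i> * (-2 * D a b) = 0" using 2 unfolding 3 by (simp add: algebra_simps)
    thus ?thesis by simp
  qed
qed

lemma sum3_swap: "(\<Sum>j\<in>A. \<Sum>k\<in>B. \<Sum>l\<in>C. f j k l) = (\<Sum>k\<in>B. \<Sum>l\<in>C. \<Sum>j\<in>A. f j k l)"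
proof -
  have "(\<Sum>j\<in>A. \<Sum>k\<in>B. \<Sum>l\<in>C. f j k l) = (\<Sum>k\<in>B. \<Sum>j\<in>A. \<Sum>l\<in>C. f j k l)"
    by (rule sum.swap)
  also have "\<dots> = (\<Sum>k\<in>B. \<Sum>l\<in>C. \<Sum>j\<in>A. f j k l)"
    by (rule sum.cong[OF refl], rule sum.swap)
  finally show ?thesis .
qed

lemma idx_lt: assumes "b < m" "x < (n::nat)" shows "b * n + x < m * n"
proof -
  have "Suc b * n \<le> m * n" using assms(1) by (intro mult_le_mono1) simp
  thus ?thesis using assms(2) by simp
qed

lemma anc_prod_index:
  assumes U: "U \<in> carrier_mat (m*n) (m*n)" and m: "m \<ge> 1" and r: "\<rho> \<in> carrier_mat n n"
    and i: "i < m*n" and j: "j < m*n"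
  shows "(U * anc_embed m n \<rho> * adj U) $$ (i,j) = (\<Sum>k<n. \<Sum>l<n. U $$ (i,k) * \<rho> $$ (k,l) * cnj (U $$ (j,l)))"
proof -
  have A: "anc_embed m n \<rho> \<in> carrier_mat (m*n) (m*n)" by (simp add: anc_embed_def)
  have nle: "n \<le> m*n" using m by simp
  have "(U * anc_embed m n \<rho> * adj U) $$ (i,j) = (\<Sum>k<m*n. \<Sum>l<m*n. U $$ (i,k) * anc_embed m n \<rho> $$ (k,l) * cnj (U $$ (j,l)))"
    by (rule mult3_index[OF U A U i j])
  also have "\<dots> = (\<Sum>k<m*n. \<Sum>l<m*n. if k < n \<and> l < n then U $$ (i,k) * \<rho> $$ (k,l) * cnj (U $$ (j,l)) else 0)"
    by (intro sum.cong refl) (auto simp: anc_embed_def)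
  also have "\<dots> = (\<Sum>k<n. \<Sum>l<n. U $$ (i,k) * \<rho> $$ (k,l) * cnj (U $$ (j,l)))"
  proof -
    have "(\<Sum>k<m*n. \<Sum>l<m*n. if k < n \<and> l < n then U $$ (i,k) * \<rho> $$ (k,l) * cnj (U $$ (j,l)) else 0)
       = (\<Sum>k<n. \<Sum>l<m*n. if k < n \<and> l < n then U $$ (i,k) * \<rho> $$ (k,l) * cnj (U $$ (j,l)) else 0)"
      by (rule sum.mono_neutral_right) (use nle in auto)
    also have "\<dots> = (\<Sum>k<n. \<Sum>l<n. if k < n \<and> l < n then U $$ (i,k) * \<rho> $$ (k,l) * cnj (U $$ (j,l)) else 0)"
      by (intro sum.cong refl sum.mono_neutral_right) (use nle in auto)
    finally show ?thesis by simp
  qed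
  finally show ?thesis .
qed

lemma coeff_eq:
  assumes K: "kraus_ops n Ks" and dil: "dilation n (kraus_channel n Ks) m U"
    and x: "x < n" and y: "y < n" and k: "k < n" and l: "l < n"
  shows "(\<Sum>j<length Ks. Ks!j $$ (x,k) * cnj (Ks!j $$ (y,l))) = (\<Sum>b<m. U $$ (b*n+x, k) * cnj (U $$ (b*n+y, l)))"
proof -
  have m: "m \<ge> 1" and U: "U \<in> carrier_mat (m*n) (m*n)"
    and eq: "\<And>\<rho>. density_mat n \<rho> \<Longrightarrow> kraus_channel n Ks \<rho> = ptrace_B m n (U * anc_embed m n \<rho> * adj U)"
    using dil by (auto simp: dilation_def unitary_mat_def)
  have Kc: "\<And>j. j < length Ks \<Longrightarrow> Ks ! j \<in> carrier_mat n n" using K by (auto simp: kraus_ops_def)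
  let ?D = "\<lambda>k l. (\<Sum>j<length Ks. Ks!j $$ (x,k) * cnj (Ks!j $$ (y,l))) - (\<Sum>b<m. U $$ (b*n+x, k) * cnj (U $$ (b*n+y, l)))"
  have "?D k l = 0"
  proof (rule polar[OF _ k l])
    fix \<rho> assume d: "density_mat n \<rho>"
    hence r: "\<rho> \<in> carrier_mat n n" by (simp add: density_mat_def)
    have "kraus_channel n Ks \<rho> $$ (x,y) = ptrace_B m n (U * anc_embed m n \<rho> * adj U) $$ (x,y)"
      using eq[OF d] by simp
    also have "kraus_channel n Ks \<rho> $$ (x,y) = (\<Sum>j<length Ks. \<Sum>k<n. \<Sum>l<n. Ks!j $$ (x,k) * \<rho> $$ (k,l) * cnj (Ks!j $$ (y,l)))"
      unfolding kraus_channel_def using x y by (simp add: mult3_index[OF Kc r Kc x y])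
    also have "ptrace_B m n (U * anc_embed m n \<rho> * adj U) $$ (x,y) = (\<Sum>b<m. \<Sum>k<n. \<Sum>l<n. U $$ (b*n+x,k) * \<rho> $$ (k,l) * cnj (U $$ (b*n+y,l)))"
      unfolding ptrace_B_def using x y by (simp add: anc_prod_index[OF U m r idx_lt idx_lt])
    finally have e: "(\<Sum>j<length Ks. \<Sum>k<n. \<Sum>l<n. Ks!j $$ (x,k) * \<rho> $$ (k,l) * cnj (Ks!j $$ (y,l)))
      = (\<Sum>b<m. \<Sum>k<n. \<Sum>l<n. U $$ (b*n+x,k) * \<rho> $$ (k,l) * cnj (U $$ (b*n+y,l)))" .
    have e1: "(\<Sum>k<n. \<Sum>l<n. \<rho> $$ (k,l) * (\<Sum>j<length Ks. Ks!j $$ (x,k) * cnj (Ks!j $$ (y,l))))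
       = (\<Sum>j<length Ks. \<Sum>k<n. \<Sum>l<n. Ks!j $$ (x,k) * \<rho> $$ (k,l) * cnj (Ks!j $$ (y,l)))"
      by (simp add: sum_distrib_left mult_ac, rule sum3_swap[symmetric])
    have e2: "(\<Sum>k<n. \<Sum>l<n. \<rho> $$ (k,l) * (\<Sum>b<m. U $$ (b*n+x, k) * cnj (U $$ (b*n+y, l))))
       = (\<Sum>b<m. \<Sum>k<n. \<Sum>l<n. U $$ (b*n+x,k) * \<rho> $$ (k,l) * cnj (U $$ (b*n+y,l)))"
      by (simp add: sum_distrib_left mult_ac, rule sum3_swap[symmetric])
    show "(\<Sum>k<n. \<Sum>l<n. \<rho> $$ (k,l) * ?D k l) = 0"
      using e e1 e2 by (simp add: right_diff_distrib sum_subtractf)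
  qed
  thus ?thesis by simp
qed

lemma sum_sq_swap:
  fixes g :: "'j \<Rightarrow> nat \<Rightarrow> complex"
  shows "(\<Sum>a\<in>A. \<Sum>a'\<in>A. \<Sum>j\<in>J. g j a * cnj (g j a')) = (\<Sum>j\<in>J. (\<Sum>a\<in>A. g j a) * cnj (\<Sum>a'\<in>A. g j a'))"
proof -
  have "(\<Sum>j\<in>J. (\<Sum>a\<in>A. g j a) * cnj (\<Sum>a'\<in>A. g j a')) = (\<Sum>j\<in>J. \<Sum>a\<in>A. \<Sum>a'\<in>A. g j a * cnj (g j a'))"
    by (simp add: cnj_sum sum_distrib_left sum_distrib_right) (rule sum.cong[OF refl], rule sum.swap)
  also have "\<dots> = (\<Sum>a\<in>A. \<Sum>a'\<in>A. \<Sum>j\<in>J. g j a * cnj (g j a'))" by (rule sum3_swap)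
  finally show ?thesis by simp
qed

lemma trace_bound:
  assumes K: "kraus_ops n Ks" and ne: "Ks \<noteq> []"
    and tr0: "\<forall>j. 1 \<le> j \<and> j < length Ks \<longrightarrow> mtrace (Ks ! j) = 0"
    and dil: "dilation n (kraus_channel n Ks) m U"
  shows "cmod (\<Sum>a<n. U $$ (a,a)) \<le> cmod (mtrace (Ks!0))"
proof -
  have m: "m \<ge> 1" using dil by (auto simp: dilation_def)
  have Kc: "\<And>j. j < length Ks \<Longrightarrow> Ks ! j \<in> carrier_mat n n" using K by (auto simp: kraus_ops_def)
  let ?t = "\<lambda>j. (\<Sum>a<n. Ks!j $$ (a,a))"
  let ?u = "\<lambda>b. (\<Sum>a<n. U $$ (b*n+a,a))"
  have mt: "\<And>j. j < length Ks \<Longrightarrow> mtrace (Ks!j) = ?t j" using Kc by (auto simp: mtrace_def)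
  have "(\<Sum>a<n. \<Sum>a'<n. \<Sum>j<length Ks. Ks!j $$ (a,a) * cnj (Ks!j $$ (a',a')))
      = (\<Sum>a<n. \<Sum>a'<n. \<Sum>b<m. U $$ (b*n+a, a) * cnj (U $$ (b*n+a', a')))"
    by (intro sum.cong refl coeff_eq[OF K dil]) auto
  hence "(\<Sum>j<length Ks. ?t j * cnj (?t j)) = (\<Sum>b<m. ?u b * cnj (?u b))"
    unfolding sum_sq_swap .
  also have "(\<Sum>j<length Ks. ?t j * cnj (?t j)) = (\<Sum>j<length Ks. if j = 0 then ?t 0 * cnj (?t 0) else 0)"
    by (intro sum.cong refl) (use tr0 mt in auto)
  also have "\<dots> = ?t 0 * cnj (?t 0)" using ne by simp
  finally have "complex_of_real ((cmod (?t 0))^2) = complex_of_real (\<Sum>b<m. (cmod (?u b))^2)"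
    by (simp add: complex_norm_square del: of_real_power)
  hence eq: "(cmod (?t 0))^2 = (\<Sum>b<m. (cmod (?u b))^2)" using of_real_eq_iff by blast
  have "(cmod (?u 0))^2 \<le> (\<Sum>b<m. (cmod (?u b))^2)"
    by (rule member_le_sum) (use m in auto)
  hence "(cmod (?u 0))^2 \<le> (cmod (?t 0))^2" using eq by simp
  hence "cmod (?u 0) \<le> cmod (?t 0)" by (simp add: power2_le_iff_abs_le)
  thus ?thesis using mt[of 0] ne by simp
qed

lemma trace_le_n:
  assumes K: "kraus_ops n Ks" and ne: "Ks \<noteq> []"
  shows "cmod (mtrace (Ks!0)) \<le> real n"
proof -
  have Kc: "\<And>j. j < length Ks \<Longrightarrow> Ks ! j \<in> carrier_mat n n" using K by (auto simp: kraus_ops_def)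
  have each: "cmod (Ks!0 $$ (a,a)) \<le> 1" if a: "a < n" for a
  proof -
    have "mat n n (\<lambda>(a,a'). \<Sum>j<length Ks. (adj (Ks ! j) * Ks ! j) $$ (a,a')) $$ (a,a) = 1\<^sub>m n $$ (a,a)"
      using K by (simp add: kraus_ops_def)
    hence "(\<Sum>j<length Ks. (adj (Ks ! j) * Ks ! j) $$ (a,a)) = 1" using a by simp
    also have "(\<Sum>j<length Ks. (adj (Ks ! j) * Ks ! j) $$ (a,a)) = (\<Sum>j<length Ks. \<Sum>x<n. cnj (Ks!j $$ (x,a)) * Ks!j $$ (x,a))"
      by (intro sum.cong refl) (simp add: adj_mult_index[OF Kc Kc a a])
    also have "\<dots> = complex_of_real (\<Sum>j<length Ks. \<Sum>x<n. (cmod (Ks!j $$ (x,a)))^2)"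
      by (simp add: complex_norm_square mult.commute del: of_real_power)
    finally have s1: "(\<Sum>j<length Ks. \<Sum>x<n. (cmod (Ks!j $$ (x,a)))^2) = 1"
      using of_real_eq_1_iff by blast
    have "(cmod (Ks!0 $$ (a,a)))^2 \<le> (\<Sum>x<n. (cmod (Ks!0 $$ (x,a)))^2)"
      by (rule member_le_sum) (use a in auto)
    also have "\<dots> \<le> (\<Sum>j<length Ks. \<Sum>x<n. (cmod (Ks!j $$ (x,a)))^2)"
      by (rule member_le_sum[where f="\<lambda>j. \<Sum>x<n. (cmod (Ks!j $$ (x,a)))^2"]) (use ne in \<open>auto intro: sum_nonneg\<close>)
    finally show ?thesis using s1 by (simp add: abs_square_le_1)
  qed
  have "cmod (mtrace (Ks!0)) = cmod (\<Sum>a<n. Ks!0 $$ (a,a))" using Kc[of 0] ne by (simp add: mtrace_def)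
  also have "\<dots> \<le> (\<Sum>a<n. cmod (Ks!0 $$ (a,a)))" by (rule norm_sum)
  also have "\<dots> \<le> (\<Sum>a<n. 1)" by (rule sum_mono) (use each in auto)
  finally show ?thesis by simp
qed

lemma orthonormal_completion:
  fixes v :: "complex vec"
  assumes v: "v \<in> carrier_vec M" and v0: "v \<noteq> 0\<^sub>v M"
  shows "\<exists>W. W \<in> carrier_mat M M \<and> adj W * W = 1\<^sub>m M \<and> (\<exists>c. \<forall>k<M. W $$ (k,0) = c * v $ k)"
proof -
  interpret cof_vec_space M "TYPE(complex)" .
  define b where "b = basis_completion v"
  from basis_completion[OF v v0, folded b_def]
  have dist_b: "distinct b" and indep: "\<not> lin_dep (set b)" and bc: "set b \<subseteq> carrier_vec M"
    and hdb: "hd b = v" and len_b: "length b = M" by auto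
  have M0: "M \<noteq> 0"
  proof
    assume "M = 0"
    hence "v = 0\<^sub>v M" using v by (intro eq_vecI) auto
    thus False using v0 by simp
  qed
  from hdb len_b M0 obtain vs where bv: "b = v # vs" by (cases b, auto)
  define ws where "ws = gram_schmidt M b"
  from gram_schmidt_result[OF bc dist_b indep ws_def]
  have orth: "corthogonal ws" and wsc: "set ws \<subseteq> carrier_vec M" and len: "length ws = M" by (auto simp: len_b)
  have hdws: "hd ws = v" unfolding ws_def bv by (rule gram_schmidt_hd[OF v])
  have ws0: "ws ! 0 = v" using hdws len M0 by (metis hd_conv_nth list.size(3))
  define r where "r j = Re (ws!j \<bullet>c ws!j)" for j
  define c where "c j = 1 / sqrt (r j)" for j
  have wsj: "ws ! j \<in> carrier_vec M" if "j < M" for j using wsc len that by auto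
  have selfdot: "ws!j \<bullet>c ws!j = complex_of_real (\<Sum>k<M. (cmod (ws!j $ k))^2)" if j: "j < M" for j
    using wsj[OF j] by (simp add: scalar_prod_def lessThan_atLeast0 complex_norm_square del: of_real_power)
  have rpos: "r j > 0" if j: "j < M" for j
  proof -
    have ne: "ws!j \<bullet>c ws!j \<noteq> 0" using corthogonalD[OF orth, of j j] j len by auto
    have "r j = (\<Sum>k<M. (cmod (ws!j $ k))^2)" unfolding r_def selfdot[OF j] by simp
    moreover have "(\<Sum>k<M. (cmod (ws!j $ k))^2) \<ge> 0" by (rule sum_nonneg) auto
    moreover have "(\<Sum>k<M. (cmod (ws!j $ k))^2) \<noteq> 0"
    proof
      assume "(\<Sum>k<M. (cmod (ws!j $ k))^2) = 0"
      hence "ws!j \<bullet>c ws!j = 0" unfolding selfdot[OF j] by (simp only: of_real_0)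
      thus False using ne by simp
    qed
    ultimately show ?thesis by linarith
  qed
  have selfdot2: "ws!j \<bullet>c ws!j = complex_of_real (r j)" if j: "j < M" for j
    unfolding r_def selfdot[OF j] by simp
  define W where "W = mat M M (\<lambda>(k,j). complex_of_real (c j) * ws!j $ k)"
  have Wc: "W \<in> carrier_mat M M" by (simp add: W_def)
  have "adj W * W = 1\<^sub>m M"
  proof (rule eq_matI)
    fix i j assume i: "i < dim_row (1\<^sub>m M)" and j: "j < dim_col (1\<^sub>m M)"
    hence i: "i < M" and j: "j < M" by auto
    have "(adj W * W) $$ (i,j) = (\<Sum>k<M. cnj (W $$ (k,i)) * W $$ (k,j))"
      by (rule adj_mult_index[OF Wc Wc i j])
    also have "\<dots> = complex_of_real (c i * c j) * (\<Sum>k<M. ws!j $ k * cnj (ws!i $ k))"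
      using i j by (simp add: W_def sum_distrib_left mult_ac)
    also have "(\<Sum>k<M. ws!j $ k * cnj (ws!i $ k)) = ws!j \<bullet>c ws!i"
      using wsj[OF i] wsj[OF j] by (simp add: scalar_prod_def lessThan_atLeast0)
    also have "complex_of_real (c i * c j) * (ws!j \<bullet>c ws!i) = 1\<^sub>m M $$ (i,j)"
    proof (cases "i = j")
      case True
      have "c j * c j * r j = 1" using rpos[OF j] unfolding c_def
        by (simp add: field_simps power2_eq_square[symmetric])
      hence "complex_of_real (c j * c j) * complex_of_real (r j) = 1"
        by (metis of_real_1 of_real_mult)
      thus ?thesis using True selfdot2[OF j] i by simp
    next
      case False
      have "ws!j \<bullet>c ws!i = 0" using corthogonalD[OF orth, of j i] False i j len by auto
      thus ?thesis using False i j by simp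
    qed
    finally show "(adj W * W) $$ (i,j) = 1\<^sub>m M $$ (i,j)" .
  qed (auto simp: W_def)
  moreover have "\<forall>k<M. W $$ (k,0) = complex_of_real (c 0) * v $ k"
    using M0 ws0 by (simp add: W_def)
  ultimately show ?thesis using Wc by blast
qed

lemma sq_mult_carrier: "A \<in> carrier_mat n n \<Longrightarrow> B \<in> carrier_mat n n \<Longrightarrow> A * B \<in> carrier_mat n n"
  by simp
lemma sq_assoc: "A \<in> carrier_mat n n \<Longrightarrow> B \<in> carrier_mat n n \<Longrightarrow> C \<in> carrier_mat n n \<Longrightarrow> A * B * C = A * (B * C)"
  by (rule assoc_mult_mat)
lemmas sq_simps = sq_mult_carrier sq_assoc adj_carrier

lemma unitary_schur:
  fixes A :: "complex mat"
  assumes "A \<in> carrier_mat M M"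
  shows "\<exists>Q T. Q \<in> carrier_mat M M \<and> T \<in> carrier_mat M M \<and> adj Q * Q = 1\<^sub>m M \<and> Q * adj Q = 1\<^sub>m M
     \<and> upper_triangular T \<and> A = Q * T * adj Q"
  using assms
proof (induction M arbitrary: A)
  case 0
  have "A = 1\<^sub>m 0 * A * adj (1\<^sub>m 0)" using 0 by simp
  moreover have "upper_triangular A" using 0 by (auto simp: upper_triangular_def)
  ultimately show ?case using 0 by (intro exI[of _ "1\<^sub>m 0"] exI[of _ A]) auto
next
  case (Suc N A)
  let ?M = "Suc N"
  have A: "A \<in> carrier_mat ?M ?M" by fact
  from spectrum_non_empty[OF A] obtain e where "eigenvalue A e" by (auto simp: spectrum_def)
  then obtain v where v: "v \<in> carrier_vec ?M" and v0: "v \<noteq> 0\<^sub>v ?M" and ev: "A *\<^sub>v v = e \<cdot>\<^sub>v v"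
    using A by (auto simp: eigenvalue_def eigenvector_def)
  from orthonormal_completion[OF v v0] obtain W c where W: "W \<in> carrier_mat ?M ?M"
    and WW: "adj W * W = 1\<^sub>m ?M" and W0: "\<And>k. k < ?M \<Longrightarrow> W $$ (k,0) = c * v $ k" by blast
  have WW': "W * adj W = 1\<^sub>m ?M" using mat_mult_left_right_inverse[OF adj_carrier[OF W] W WW] .
  define A' where "A' = adj W * A * W"
  have A'c: "A' \<in> carrier_mat ?M ?M" using W A by (metis A'_def adj_carrier mult_carrier_mat)
  have AW0: "(A * W) $$ (k,0) = e * W $$ (k,0)" if k: "k < ?M" for k
  proof -
    have "(A * W) $$ (k,0) = (\<Sum>l<?M. A $$ (k,l) * W $$ (l,0))"
      using A W k by (simp add: scalar_prod_def lessThan_atLeast0)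
    also have "\<dots> = c * (\<Sum>l<?M. A $$ (k,l) * v $ l)"
      unfolding sum_distrib_left by (intro sum.cong refl) (simp add: W0)
    also have "(\<Sum>l<?M. A $$ (k,l) * v $ l) = (A *\<^sub>v v) $ k"
      using A v k by (simp add: scalar_prod_def lessThan_atLeast0)
    also have "\<dots> = e * v $ k" using ev v k by simp
    finally show ?thesis using W0[OF k] by simp
  qed
  have A'0: "A' $$ (i,0) = (if i = 0 then e else 0)" if i: "i < ?M" for i
  proof -
    have "A' = adj W * (A * W)" unfolding A'_def using W A by (simp add: sq_mult_carrier[of _ ?M] sq_assoc[of _ ?M] adj_carrier)
    hence "A' $$ (i,0) = (\<Sum>k<?M. cnj (W $$ (k,i)) * (A * W) $$ (k,0))"
      using adj_mult_index[OF W _ i, of "A * W" ?M 0] W A by simp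
    also have "\<dots> = e * (\<Sum>k<?M. cnj (W $$ (k,i)) * W $$ (k,0))"
      unfolding sum_distrib_left by (intro sum.cong refl) (simp add: AW0)
    also have "(\<Sum>k<?M. cnj (W $$ (k,i)) * W $$ (k,0)) = (adj W * W) $$ (i,0)"
      using adj_mult_index[OF W W i, of 0] by simp
    finally show ?thesis using WW i by simp
  qed
  obtain A1 A2 A0 A3 where sb: "split_block A' 1 1 = (A1,A2,A0,A3)" by (cases "split_block A' 1 1") auto
  have dimA': "dim_row A' = 1 + N" "dim_col A' = 1 + N" using A'c by auto
  note spl = split_block[OF sb dimA']
  have A1: "A1 \<in> carrier_mat 1 1" and A2: "A2 \<in> carrier_mat 1 N" and A0c: "A0 \<in> carrier_mat N 1"
    and A3: "A3 \<in> carrier_mat N N" and A'b: "A' = four_block_mat A1 A2 A0 A3" using spl by auto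
  have A0: "A0 = 0\<^sub>m N 1"
  proof (rule eq_matI)
    fix i j assume "i < dim_row (0\<^sub>m N 1)" "j < dim_col (0\<^sub>m N 1)"
    hence i: "i < N" and j: "j = 0" by auto
    have "A0 $$ (i,j) = A' $$ (Suc i, 0)" using sb j i dimA' unfolding split_block_def Let_def by auto
    thus "A0 $$ (i,j) = 0\<^sub>m N 1 $$ (i,j)" using A'0[of "Suc i"] i j by simp
  qed (use A0c in auto)
  from Suc.IH[OF A3] obtain Q3 T3 where Q3: "Q3 \<in> carrier_mat N N" and T3: "T3 \<in> carrier_mat N N"
    and QQ3: "adj Q3 * Q3 = 1\<^sub>m N" and QQ3': "Q3 * adj Q3 = 1\<^sub>m N" and ut3: "upper_triangular T3"
    and A3e: "A3 = Q3 * T3 * adj Q3" by blast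
  define B where "B = four_block_mat (1\<^sub>m 1) (0\<^sub>m 1 N) (0\<^sub>m N 1) Q3"
  define T where "T = four_block_mat A1 (A2 * Q3) (0\<^sub>m N 1) T3"
  have Bc: "B \<in> carrier_mat ?M ?M" using four_block_carrier_mat[OF one_carrier_mat[of 1] Q3] by (simp add: B_def)
  have Tc: "T \<in> carrier_mat ?M ?M" using four_block_carrier_mat[OF A1 T3] by (simp add: T_def)
  have adjB: "adj B = four_block_mat (1\<^sub>m 1) (0\<^sub>m 1 N) (0\<^sub>m N 1) (adj Q3)"
    unfolding B_def by (subst adj_four_block[of _ 1 1 _ N _ N]) (use Q3 in auto)
  have BB: "adj B * B = 1\<^sub>m ?M"
    unfolding adjB unfolding B_def using Q3
    by (subst mult_four_block_mat[of _ 1 1 _ N _ N]) (auto simp: QQ3 four_block_one_mat[of 1 N, simplified])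
  have BB': "B * adj B = 1\<^sub>m ?M"
    unfolding adjB unfolding B_def using Q3
    by (subst mult_four_block_mat[of _ 1 1 _ N _ N]) (auto simp: QQ3' four_block_one_mat[of 1 N, simplified])
  have ut: "upper_triangular T" unfolding T_def
    by (rule upper_triangular_four_block[OF A1 T3 _ ut3]) (use A1 in \<open>auto simp: upper_triangular_def\<close>)
  have BTB: "B * T * adj B = A'"
  proof -
    have "B * T = four_block_mat A1 (A2 * Q3) (0\<^sub>m N 1) (Q3 * T3)"
      unfolding B_def T_def using A1 A2 Q3 T3
      by (subst mult_four_block_mat[OF one_carrier_mat zero_carrier_mat zero_carrier_mat Q3 A1 _ zero_carrier_mat T3]) (auto intro: mult_carrier_mat)
    also have "\<dots> * adj B = four_block_mat A1 (A2 * Q3 * adj Q3) (0\<^sub>m N 1) (Q3 * T3 * adj Q3)"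
      unfolding adjB using A1 A2 Q3 T3
      by (subst mult_four_block_mat[OF A1 _ zero_carrier_mat _ one_carrier_mat zero_carrier_mat zero_carrier_mat adj_carrier[OF Q3]]) (auto intro!: mult_carrier_mat)
    also have "A2 * Q3 * adj Q3 = A2" using A2 Q3 QQ3'
      by (simp add: assoc_mult_mat[of _ 1 N _ N _ N])
    finally show ?thesis using A'b A0 A3e by simp
  qed
  define Q where "Q = W * B"
  have Qc: "Q \<in> carrier_mat ?M ?M" using W Bc by (simp add: Q_def)
  have adjQ: "adj Q = adj B * adj W" unfolding Q_def by (rule adj_mult[OF W Bc])
  have QQ: "adj Q * Q = 1\<^sub>m ?M"
  proof -
    have "adj Q * Q = adj B * (adj W * W) * B" unfolding adjQ unfolding Q_def using W Bc
      by (simp add: sq_mult_carrier[of _ ?M] sq_assoc[of _ ?M] adj_carrier)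
    thus ?thesis using WW BB Bc by simp
  qed
  have QQ': "Q * adj Q = 1\<^sub>m ?M"
  proof -
    have "Q * adj Q = W * (B * adj B) * adj W" unfolding adjQ unfolding Q_def using W Bc
      by (simp add: sq_mult_carrier[of _ ?M] sq_assoc[of _ ?M] adj_carrier)
    thus ?thesis using WW' BB' W by simp
  qed
  have "Q * T * adj Q = W * (B * T * adj B) * adj W" unfolding adjQ unfolding Q_def using W Bc Tc
    by (simp add: sq_mult_carrier[of _ ?M] sq_assoc[of _ ?M] adj_carrier)
  also have "\<dots> = W * A' * adj W" using BTB by simp
  also have "\<dots> = (W * adj W) * A * (W * adj W)" unfolding A'_def using W A
    by (simp add: sq_mult_carrier[of _ ?M] sq_assoc[of _ ?M] adj_carrier)
  also have "\<dots> = A" using WW' A by simp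
  finally show ?case using Qc Tc QQ QQ' ut by metis
qed

lemma unitary_eigenvalue_norm:
  assumes U: "U \<in> carrier_mat M M" and UU: "adj U * U = 1\<^sub>m M" and ev: "eigenvalue U z"
  shows "cmod z = 1"
proof -
  from ev U obtain v where v: "v \<in> carrier_vec M" and v0: "v \<noteq> 0\<^sub>v M" and e: "U *\<^sub>v v = z \<cdot>\<^sub>v v"
    by (auto simp: eigenvalue_def eigenvector_def)
  define s where "s = (\<Sum>k<M. v $ k * cnj (v $ k))"
  have Uv: "\<And>i. i < M \<Longrightarrow> (\<Sum>k<M. U $$ (i,k) * v $ k) = z * v $ i"
  proof -
    fix i assume i: "i < M"
    have "(U *\<^sub>v v) $ i = (\<Sum>k<M. U $$ (i,k) * v $ k)" using U v i
      by (simp add: scalar_prod_def lessThan_atLeast0)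
    thus "(\<Sum>k<M. U $$ (i,k) * v $ k) = z * v $ i" using e i v by simp
  qed
  have "(\<Sum>i<M. (\<Sum>k<M. U $$ (i,k) * v $ k) * cnj (\<Sum>l<M. U $$ (i,l) * v $ l)) = z * cnj z * s"
  proof -
    have "(\<Sum>i<M. (\<Sum>k<M. U $$ (i,k) * v $ k) * cnj (\<Sum>l<M. U $$ (i,l) * v $ l)) = (\<Sum>i<M. (z * v $ i) * cnj (z * v $ i))"
      by (intro sum.cong refl) (simp add: Uv)
    thus ?thesis by (simp add: s_def sum_distrib_left mult_ac)
  qed
  moreover have "(\<Sum>i<M. (\<Sum>k<M. U $$ (i,k) * v $ k) * cnj (\<Sum>l<M. U $$ (i,l) * v $ l)) = s"
  proof -
    have "(\<Sum>i<M. (\<Sum>k<M. U $$ (i,k) * v $ k) * cnj (\<Sum>l<M. U $$ (i,l) * v $ l))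
       = (\<Sum>i<M. \<Sum>k<M. \<Sum>l<M. v $ k * cnj (v $ l) * (cnj (U $$ (i,l)) * U $$ (i,k)))"
      by (simp add: cnj_sum sum_distrib_left sum_distrib_right mult_ac) (rule sum.cong[OF refl], rule sum.swap)
    also have "\<dots> = (\<Sum>k<M. \<Sum>l<M. \<Sum>i<M. v $ k * cnj (v $ l) * (cnj (U $$ (i,l)) * U $$ (i,k)))"
      by (rule sum3_swap)
    also have "\<dots> = (\<Sum>k<M. \<Sum>l<M. v $ k * cnj (v $ l) * (adj U * U) $$ (l,k))"
      by (intro sum.cong refl) (simp add: adj_mult_index[OF U U] sum_distrib_left)
    also have "\<dots> = (\<Sum>k<M. \<Sum>l<M. if l = k then v $ k * cnj (v $ k) else 0)"
      by (intro sum.cong refl) (auto simp: UU)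
    finally show ?thesis by (simp add: s_def)
  qed
  ultimately have zs: "z * cnj z * s = s" by simp
  have "s \<noteq> 0"
  proof
    assume s0: "s = 0"
    have "s = complex_of_real (\<Sum>k<M. (cmod (v $ k))^2)"
      by (simp add: s_def complex_norm_square del: of_real_power)
    hence sr: "(\<Sum>k<M. (cmod (v $ k))^2) = 0" using s0 by (metis of_real_eq_0_iff)
    have "v = 0\<^sub>v M"
    proof (rule eq_vecI)
      fix k assume "k < dim_vec (0\<^sub>v M)"
      hence k: "k < M" by simp
      have "(cmod (v $ k))^2 = 0" using sr k by (subst (asm) sum_nonneg_eq_0_iff) auto
      thus "v $ k = 0\<^sub>v M $ k" using k by simp
    qed (use v in auto)
    thus False using v0 by simp
  qed
  hence "z * cnj z = 1" using zs by simp
  hence "complex_of_real ((cmod z)^2) = 1" by (simp add: complex_norm_square del: of_real_power)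
  hence "(cmod z)^2 = 1" using of_real_eq_1_iff by blast
  thus ?thesis by (smt (verit) norm_ge_zero power2_eq_1_iff)
qed

lemma unitary_cost_props:
  assumes Uu: "unitary_mat M U" and M: "M > 0"
  shows "0 \<le> unitary_cost U" "unitary_cost U \<le> pi"
    "\<And>z. eigenvalue U z \<Longrightarrow> cos (unitary_cost U) \<le> Re z"
proof -
  have U: "U \<in> carrier_mat M M" and UU: "adj U * U = 1\<^sub>m M" using Uu by (auto simp: unitary_mat_def)
  have Seq: "{\<bar>Arg z\<bar> | z. eigenvalue U z} = (\<lambda>z. \<bar>Arg z\<bar>) ` spectrum U"
    by (auto simp: spectrum_def)
  have fin: "finite {\<bar>Arg z\<bar> | z. eigenvalue U z}" unfolding Seq
    using card_finite_spectrum(1)[OF U] by simp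
  have ne: "{\<bar>Arg z\<bar> | z. eigenvalue U z} \<noteq> {}" unfolding Seq
    using spectrum_non_empty[OF U M] by simp
  have ge: "\<bar>Arg z\<bar> \<le> unitary_cost U" if "eigenvalue U z" for z
    unfolding unitary_cost_def by (rule Max_ge[OF fin]) (use that in auto)
  have mem: "unitary_cost U \<in> {\<bar>Arg z\<bar> | z. eigenvalue U z}"
    unfolding unitary_cost_def by (rule Max_in[OF fin ne])
  then obtain z0 where "unitary_cost U = \<bar>Arg z0\<bar>" by auto
  moreover have "- pi < Arg z0 \<and> Arg z0 \<le> pi" by (rule Arg_bounded)
  ultimately show th0: "0 \<le> unitary_cost U" and thpi: "unitary_cost U \<le> pi" by auto
  fix z assume ev: "eigenvalue U z"
  have n1: "cmod z = 1" by (rule unitary_eigenvalue_norm[OF U UU ev])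
  hence z0: "z \<noteq> 0" by auto
  have "Re z = cos (Arg z)" using cos_Arg[OF z0] n1 by simp
  also have "cos (Arg z) = cos \<bar>Arg z\<bar>" by (simp add: abs_if)
  also have "cos (unitary_cost U) \<le> cos \<bar>Arg z\<bar>"
    by (rule cos_monotone_0_pi_le) (use ge[OF ev] thpi in auto)
  finally show "cos (unitary_cost U) \<le> Re z" by simp
qed

lemma unitary_diag_bound:
  assumes Uu: "unitary_mat M U" and M: "M > 0" and a: "a < M"
  shows "cos (unitary_cost U) \<le> Re (U $$ (a,a))"
proof -
  have U: "U \<in> carrier_mat M M" and UU: "adj U * U = 1\<^sub>m M" and UU': "U * adj U = 1\<^sub>m M"
    using Uu by (auto simp: unitary_mat_def)
  let ?c = "cos (unitary_cost U)"
  from unitary_schur[OF U] obtain Q T where Q: "Q \<in> carrier_mat M M" and T: "T \<in> carrier_mat M M"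
    and QQ: "adj Q * Q = 1\<^sub>m M" and QQ': "Q * adj Q = 1\<^sub>m M" and ut: "upper_triangular T"
    and Ue: "U = Q * T * adj Q" by blast
  have Te: "T = adj Q * U * Q"
  proof -
    have "adj Q * U * Q = (adj Q * Q) * T * (adj Q * Q)" unfolding Ue using Q T
      by (simp add: sq_mult_carrier[of _ M] sq_assoc[of _ M] adj_carrier)
    also have "\<dots> = T" using QQ T by simp
    finally show ?thesis by simp
  qed
  have TT: "adj T * T = 1\<^sub>m M"
  proof -
    have aT: "adj T = adj Q * adj U * Q" unfolding Te using Q U
      by (simp add: adj_mult[of _ M M _ M] sq_mult_carrier[of _ M] sq_assoc[of _ M] adj_carrier)
    have "adj T * T = (adj Q * adj U * Q) * (adj Q * U * Q)" using aT Te by simp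
    also have "\<dots> = adj Q * adj U * (Q * adj Q) * U * Q" using Q U
      by (simp add: sq_mult_carrier[of _ M] sq_assoc[of _ M] adj_carrier)
    also have "\<dots> = adj Q * (adj U * U) * Q" using Q U QQ'
      by (simp add: sq_mult_carrier[of _ M] sq_assoc[of _ M] adj_carrier)
    also have "\<dots> = 1\<^sub>m M" using Q UU QQ by simp
    finally show ?thesis .
  qed
  have "similar_mat_wit U T Q (adj Q)"
  proof -
    have d: "dim_row U = M" using U by simp
    have "{U, T, Q, adj Q} \<subseteq> carrier_mat M M" using U T Q adj_carrier[OF Q] by blast
    thus ?thesis unfolding similar_mat_wit_def Let_def d using QQ QQ' Ue by blast
  qed
  hence simUT: "similar_mat U T" unfolding similar_mat_def by blast
  have evd: "eigenvalue U (T $$ (k,k))" if k: "k < M" for k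
  proof -
    have "poly (char_poly T) (T $$ (k,k)) = 0"
      unfolding char_poly_upper_triangular[OF T ut] using k T
      by (auto simp: poly_prod_list prod_list_zero_iff diag_mat_def)
    hence "poly (char_poly U) (T $$ (k,k)) = 0" using char_poly_similar[OF simUT] by simp
    thus ?thesis using eigenvalue_root_char_poly[OF U] by simp
  qed
  have offd: "T $$ (i,k) = 0" if i: "i < M" and k: "k < M" and ik: "i \<noteq> k" for i k
  proof -
    have "(adj T * T) $$ (k,k) = 1" using TT k by simp
    hence "(\<Sum>j<M. cnj (T $$ (j,k)) * T $$ (j,k)) = 1" using adj_mult_index[OF T T k k] by simp
    hence "complex_of_real (\<Sum>j<M. (cmod (T $$ (j,k)))^2) = 1"
      by (simp add: complex_norm_square mult.commute del: of_real_power)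
    hence s1: "(\<Sum>j<M. (cmod (T $$ (j,k)))^2) = 1" using of_real_eq_1_iff by blast
    have dk: "(cmod (T $$ (k,k)))^2 = 1"
      using unitary_eigenvalue_norm[OF U UU evd[OF k]] by simp
    have "(\<Sum>j<M. (cmod (T $$ (j,k)))^2) = (cmod (T $$ (k,k)))^2 + (\<Sum>j\<in>{..<M}-{k}. (cmod (T $$ (j,k)))^2)"
      using k by (subst sum.remove[of _ k]) auto
    hence z: "(\<Sum>j\<in>{..<M}-{k}. (cmod (T $$ (j,k)))^2) = 0" using s1 dk by simp
    have "(cmod (T $$ (i,k)))^2 = 0"
      using z i ik by (subst (asm) sum_nonneg_eq_0_iff) auto
    thus ?thesis by simp
  qed
  have "U $$ (a,a) = (\<Sum>k<M. \<Sum>l<M. Q $$ (a,k) * T $$ (k,l) * cnj (Q $$ (a,l)))"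
    unfolding Ue by (rule mult3_index[OF Q T Q a a])
  also have "\<dots> = (\<Sum>k<M. \<Sum>l<M. if l = k then Q $$ (a,k) * T $$ (k,k) * cnj (Q $$ (a,k)) else 0)"
    by (intro sum.cong refl) (auto simp: offd)
  also have "\<dots> = (\<Sum>k<M. Q $$ (a,k) * T $$ (k,k) * cnj (Q $$ (a,k)))" by simp
  also have "\<dots> = (\<Sum>k<M. complex_of_real ((cmod (Q $$ (a,k)))^2) * T $$ (k,k))"
    by (intro sum.cong refl) (simp add: complex_norm_square mult_ac del: of_real_power)
  finally have Uaa: "Re (U $$ (a,a)) = (\<Sum>k<M. (cmod (Q $$ (a,k)))^2 * Re (T $$ (k,k)))"
    by (simp add: Re_sum)
  have "(Q * adj Q) $$ (a,a) = 1" using QQ' a by simp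
  hence "(\<Sum>k<M. Q $$ (a,k) * cnj (Q $$ (a,k))) = 1" using mult_adj_index[OF Q Q a a] by simp
  hence "complex_of_real (\<Sum>k<M. (cmod (Q $$ (a,k)))^2) = 1"
    by (simp add: complex_norm_square del: of_real_power)
  hence r1: "(\<Sum>k<M. (cmod (Q $$ (a,k)))^2) = 1" using of_real_eq_1_iff by blast
  have "?c = (\<Sum>k<M. (cmod (Q $$ (a,k)))^2 * ?c)" using r1 by (simp add: sum_distrib_right[symmetric])
  also have "\<dots> \<le> (\<Sum>k<M. (cmod (Q $$ (a,k)))^2 * Re (T $$ (k,k)))"
    by (rule sum_mono, rule mult_left_mono) (use unitary_cost_props(3)[OF Uu M evd] in auto)
  finally show ?thesis using Uaa by simp
qed

lemma sum_blocks: fixes g :: "nat \<Rightarrow> 'a::comm_monoid_add" and d n :: nat shows "(\<Sum>i<d*n. g i) = (\<Sum>b<d. \<Sum>x<n. g (b*n + x))"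
proof -
  have "(\<Sum>i<d*n. g i) = (\<Sum>b<d. sum g {b*n..<b*n+n})"
    using sum.nat_group[of g n d] by (simp add: mult.commute)
  also have "\<dots> = (\<Sum>b<d. \<Sum>x<n. g (b*n + x))"
  proof (rule sum.cong[OF refl])
    fix b
    show "sum g {b*n..<b*n+n} = (\<Sum>x<n. g (b*n + x))"
      by (rule sum.reindex_bij_witness[where i="\<lambda>x. b*n+x" and j="\<lambda>i. i - b*n"]) auto
  qed
  finally show ?thesis .
qed

lemma dilation_exists:
  assumes n: "n \<ge> 1" and K: "kraus_ops n Ks"
  shows "\<exists>m U. dilation n (kraus_channel n Ks) m U"
proof -
  define d where "d = length Ks"
  define N where "N = d * n"
  have Kc: "\<And>j. j < d \<Longrightarrow> Ks ! j \<in> carrier_mat n n" using K by (auto simp: kraus_ops_def d_def)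
  define V where "V = mat N n (\<lambda>(i,j). Ks ! (i div n) $$ (i mod n, j))"
  have Vc: "V \<in> carrier_mat N n" by (simp add: V_def)
  have Vidx: "V $$ (b*n + x, k) = Ks ! b $$ (x, k)" if "b < d" "x < n" "k < n" for b x k
    using that n idx_lt[of b d x n] by (simp add: V_def N_def)
  have VV: "adj V * V = 1\<^sub>m n"
  proof (rule eq_matI)
    fix j j' assume "j < dim_row (1\<^sub>m n)" "j' < dim_col (1\<^sub>m n)"
    hence j: "j < n" and j': "j' < n" by auto
    have "(adj V * V) $$ (j,j') = (\<Sum>i<d*n. cnj (V $$ (i,j)) * V $$ (i,j'))"
      using adj_mult_index[OF Vc Vc j j'] by (simp add: N_def)
    also have "\<dots> = (\<Sum>b<d. \<Sum>x<n. cnj (V $$ (b*n+x,j)) * V $$ (b*n+x,j'))" by (rule sum_blocks)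
    also have "\<dots> = (\<Sum>b<d. \<Sum>x<n. cnj (Ks!b $$ (x,j)) * Ks!b $$ (x,j'))"
      by (intro sum.cong refl) (simp add: Vidx j j')
    also have "\<dots> = (\<Sum>b<d. (adj (Ks!b) * Ks!b) $$ (j,j'))"
      by (intro sum.cong refl) (simp add: adj_mult_index[OF Kc Kc j j'])
    also have "\<dots> = mat n n (\<lambda>(a,a'). \<Sum>j<length Ks. (adj (Ks ! j) * Ks ! j) $$ (a,a')) $$ (j,j')"
      using j j' by (simp add: d_def)
    also have "\<dots> = 1\<^sub>m n $$ (j,j')" using K by (simp add: kraus_ops_def)
    finally show "(adj V * V) $$ (j,j') = 1\<^sub>m n $$ (j,j')" .
  qed (use Vc in auto)
  define P where "P = V * adj V"
  have Pc: "P \<in> carrier_mat N N" using Vc by (simp add: P_def)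
  have aVc: "adj V \<in> carrier_mat n N" using Vc by simp
  have adjP: "adj P = P" unfolding P_def by (simp add: adj_mult[OF Vc aVc])
  have PV: "P * V = V" unfolding P_def using Vc aVc VV by (simp add: assoc_mult_mat[OF Vc aVc Vc])
  have VP: "adj V * P = adj V" unfolding P_def using Vc aVc VV by (simp add: assoc_mult_mat[OF aVc Vc aVc, symmetric])
  have PP: "P * P = P"
  proof -
    have "P * P = (P * V) * adj V" unfolding P_def using Vc aVc
      by (simp add: assoc_mult_mat[of _ N n _ N _ N] assoc_mult_mat[of _ N N _ n _ N])
    thus ?thesis using PV by (simp add: P_def)
  qed
  define R where "R = 1\<^sub>m N - P"
  have Rc: "R \<in> carrier_mat N N" using minus_carrier_mat[OF Pc] by (simp add: R_def)
  have adjR: "adj R = R" unfolding R_def using Pc by (simp add: adj_minus[OF one_carrier_mat Pc] adjP)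
  have VR: "adj V * R = 0\<^sub>m n N" unfolding R_def using aVc Pc
    by (simp add: mult_minus_distrib_mat[OF aVc one_carrier_mat Pc] VP right_mult_one_mat[OF aVc] minus_r_inv_mat[OF aVc])
  have RV: "R * V = 0\<^sub>m N n" unfolding R_def using Vc Pc
    by (simp add: minus_mult_distrib_mat[OF one_carrier_mat Pc Vc] PV left_mult_one_mat[OF Vc] minus_r_inv_mat[OF Vc])
  have RR: "R * R + P = 1\<^sub>m N"
  proof -
    have "R * R = R" unfolding R_def using Pc
      by (simp add: mult_minus_distrib_mat[OF minus_carrier_mat[OF Pc] one_carrier_mat Pc]
            minus_mult_distrib_mat[OF one_carrier_mat Pc Pc] PP) (intro eq_matI, use Pc in auto)
    thus ?thesis unfolding R_def using Pc by (intro eq_matI) auto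
  qed
  define U where "U = four_block_mat V R (0\<^sub>m n n) (adj V)"
  have Uc: "U \<in> carrier_mat (Suc d * n) (Suc d * n)"
    unfolding U_def using four_block_carrier_mat[OF Vc aVc, of R "0\<^sub>m n n"] by (simp add: N_def add.commute)
  have aU: "adj U = four_block_mat (adj V) (0\<^sub>m n n) R V"
    unfolding U_def by (simp add: adj_four_block[OF Vc Rc zero_carrier_mat aVc] adjR)
  have UU: "adj U * U = 1\<^sub>m (Suc d * n)"
  proof -
    have "adj U * U = four_block_mat (adj V * V + 0\<^sub>m n n * 0\<^sub>m n n) (adj V * R + 0\<^sub>m n n * adj V)
        (R * V + V * 0\<^sub>m n n) (R * R + V * adj V)"
      unfolding aU unfolding U_def
      by (rule mult_four_block_mat[OF aVc zero_carrier_mat Rc Vc Vc Rc zero_carrier_mat aVc])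
    also have "\<dots> = four_block_mat (1\<^sub>m n) (0\<^sub>m n N) (0\<^sub>m N n) (1\<^sub>m N)"
      using VV VR RV RR aVc Vc by (simp add: P_def)
    also have "\<dots> = 1\<^sub>m (Suc d * n)" by (simp add: four_block_one_mat N_def)
    finally show ?thesis .
  qed
  have UU': "U * adj U = 1\<^sub>m (Suc d * n)"
    by (rule mat_mult_left_right_inverse[OF adj_carrier[OF Uc] Uc UU])
  have unit: "unitary_mat (Suc d * n) U" using Uc UU UU' by (simp add: unitary_mat_def)
  have Uidx: "U $$ (b*n + x, k) = (if b < d then Ks ! b $$ (x, k) else 0)"
    if "b < Suc d" "x < n" "k < n" for b x k
  proof (cases "b < d")
    case True
    have "b * n + x < N" using idx_lt[OF True that(2)] by (simp add: N_def)
    thus ?thesis using True that Vc Vidx[OF True that(2,3)] by (simp add: U_def)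
  next
    case False
    hence b: "b = d" using that by simp
    have "\<not> b * n + x < N" using b by (simp add: N_def)
    thus ?thesis using b that Vc Rc by (simp add: U_def N_def)
  qed
  have "dilation n (kraus_channel n Ks) (Suc d) U"
    unfolding dilation_def
  proof (intro conjI allI impI)
    show "Suc d \<ge> 1" by simp
    show "unitary_mat (Suc d * n) U" by fact
    fix \<rho> assume "density_mat n \<rho>"
    hence r: "\<rho> \<in> carrier_mat n n" by (simp add: density_mat_def)
    show "kraus_channel n Ks \<rho> = ptrace_B (Suc d) n (U * anc_embed (Suc d) n \<rho> * adj U)"
    proof (rule eq_matI)
      fix x y assume "x < dim_row (ptrace_B (Suc d) n (U * anc_embed (Suc d) n \<rho> * adj U))"
        "y < dim_col (ptrace_B (Suc d) n (U * anc_embed (Suc d) n \<rho> * adj U))"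
      hence x: "x < n" and y: "y < n" by (auto simp: ptrace_B_def)
      have "ptrace_B (Suc d) n (U * anc_embed (Suc d) n \<rho> * adj U) $$ (x,y)
          = (\<Sum>b<Suc d. \<Sum>k<n. \<Sum>l<n. U $$ (b*n+x,k) * \<rho> $$ (k,l) * cnj (U $$ (b*n+y,l)))"
        unfolding ptrace_B_def using x y by (simp add: anc_prod_index[OF Uc _ r idx_lt idx_lt])
      also have "\<dots> = (\<Sum>b<Suc d. if b < d then (\<Sum>k<n. \<Sum>l<n. Ks!b $$ (x,k) * \<rho> $$ (k,l) * cnj (Ks!b $$ (y,l))) else 0)"
        by (intro sum.cong refl) (auto simp: Uidx x y)
      also have "\<dots> = (\<Sum>b<d. \<Sum>k<n. \<Sum>l<n. Ks!b $$ (x,k) * \<rho> $$ (k,l) * cnj (Ks!b $$ (y,l)))"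
        by simp
      also have "\<dots> = kraus_channel n Ks \<rho> $$ (x,y)"
        unfolding kraus_channel_def using x y by (simp add: mult3_index[OF Kc r Kc x y] d_def)
      finally show "kraus_channel n Ks \<rho> $$ (x,y) = ptrace_B (Suc d) n (U * anc_embed (Suc d) n \<rho> * adj U) $$ (x,y)"
        by simp
    qed (auto simp: kraus_channel_def ptrace_B_def)
  qed
  thus ?thesis by blast
qed

lemma cost_bound:
  assumes n: "n \<ge> 1" and ne: "Ks \<noteq> []" and K: "kraus_ops n Ks"
    and tr0: "\<forall>j. 1 \<le> j \<and> j < length Ks \<longrightarrow> mtrace (Ks ! j) = 0"
    and dil: "dilation n (kraus_channel n Ks) m U"
  shows "arccos (cmod (mtrace (Ks ! 0)) / real n) \<le> unitary_cost U"
proof -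
  have m: "m \<ge> 1" and Uu: "unitary_mat (m*n) U" using dil by (auto simp: dilation_def)
  have pos: "m * n > 0" using m n by simp
  have nm: "n \<le> m * n" using m by simp
  let ?th = "unitary_cost U"
  have th0: "0 \<le> ?th" and thpi: "?th \<le> pi" using unitary_cost_props[OF Uu pos] by auto
  have "real n * cos ?th = (\<Sum>a<n. cos ?th)" by simp
  also have "\<dots> \<le> (\<Sum>a<n. Re (U $$ (a,a)))"
    by (rule sum_mono, rule unitary_diag_bound[OF Uu pos], rule less_le_trans[OF _ nm]) simp
  also have "\<dots> = Re (\<Sum>a<n. U $$ (a,a))" by (simp add: Re_sum)
  also have "\<dots> \<le> cmod (\<Sum>a<n. U $$ (a,a))" by (rule complex_Re_le_cmod)
  also have "\<dots> \<le> cmod (mtrace (Ks!0))" by (rule trace_bound[OF K ne tr0 dil])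
  finally have c: "real n * cos ?th \<le> cmod (mtrace (Ks!0))" .
  define x where "x = cmod (mtrace (Ks ! 0)) / real n"
  have npos: "real n > 0" using n by simp
  have x1: "x \<le> 1" using trace_le_n[OF K ne] npos by (simp add: x_def)
  have cx: "cos ?th \<le> x" using c npos by (simp add: x_def field_simps)
  have "arccos x \<le> arccos (cos ?th)"
    by (rule arccos_le_arccos) (use cx x1 cos_ge_minus_one in auto)
  also have "\<dots> = ?th" by (rule arccos_cos[OF th0 thpi])
  finally show ?thesis by (simp add: x_def)
qed

theorem lemma2:
  fixes n :: nat and Ks :: "complex mat list"
  assumes "n \<ge> 1"
    and "Ks \<noteq> []"
    and "kraus_ops n Ks"
    and "\<forall>j. 1 \<le> j \<and> j < length Ks \<longrightarrow> mtrace (Ks ! j) = 0"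
  shows "arccos (cmod (mtrace (Ks ! 0)) / real n) \<le> channel_cost n (kraus_channel n Ks)"
proof -
  obtain m0 U0 where d0: "dilation n (kraus_channel n Ks) m0 U0"
    using dilation_exists[OF assms(1) assms(3)] by blast
  show ?thesis unfolding channel_cost_def
  proof (rule cInf_greatest)
    show "{unitary_cost U |U m. dilation n (kraus_channel n Ks) m U} \<noteq> {}" using d0 by blast
    fix y assume "y \<in> {unitary_cost U |U m. dilation n (kraus_channel n Ks) m U}"
    then obtain U m where y: "y = unitary_cost U" and d: "dilation n (kraus_channel n Ks) m U" by blast
    show "arccos (cmod (mtrace (Ks ! 0)) / real n) \<le> y"
      unfolding y by (rule cost_bound[OF assms d])
  qed
qed

end
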